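(* Let $S$ be an inverse monoid with identity element $1$, and let $(X,E(S),p)$ be a presheaf of geodesic metric spaces on which $S$ acts properly and coboundedly. Then: (1) there exists a finite quasi-generating set $\mathcal{M}\subseteq S$; (2) there exists $x_1\in X_1$ such that the orbit map $(S,d_{\mathcal{M}})\to (X,d)$, $s\mapsto x_1\cdot s$, is an order-preserving quasi-isometry, where $d_{\mathcal M}$ is the Cayley metric associated to $\mathcal M$.
   Context: An inverse semigroup is a semigroup $S$ in which every $s$ has a unique $s^{-1}\in S$ with $ss^{-1}s=s$ and $s^{-1}ss^{-1}=s^{-1}$; an inverse monoid is one with an identity $1$. $E(S)$ is the set of idempotents ($e e=e$); idempotents commute. The natural partial order on $S$ is $s\le t$ iff $s=et$ for some $e\in E(S)$; $E(S)$ is a meet-semilattice with meet $ef$. Write $\mathbf{d}(s)=s^{-1}s$. Green's relation $\mathcal L$: $(s,t)\in\mathcal L$ iff $s^{-1}s=t^{-1}t$. Presheaf: for a meet-semilattice $E$, a presheaf $(X,E,p)$ is a set $X$ with maps $p\colon X\to E$ and $X\times E\to X$, $(x,e)\mapsto x\cdot e$, such that $(x\cdot e)\cdot f=x\cdot ef$, $x\cdot p(x)=x$, and $p(x\cdot e)=p(x)e$. Fibers are $X_e=p^{-1}(e)$. $X$ is partially ordered by $x\le y$ iff $x=y\cdot p(x)$. A presheaf of metric spaces is such a presheaf with $p$ surjective, each fiber $X_e$ a metric space with metric $d_e$, and $d_e(x,y)\ge d_{ef}(x\cdot f,y\cdot f)$ for all $x,y\in X_e$, $f\in E$. Set $d(x,y)=d_e(x,y)$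 if $x,y\in X_e$ and $d(x,y)=\infty$ if $x,y$ lie in different fibers. It is geodesic if whenever $D=d(x,y)<\infty$ there is an isometric embedding $\gamma\colon[0,D]\to X$ with $\gamma(0)=x$, $\gamma(D)=y$. Action: $S$ acts on a presheaf of metric spaces $(X,E(S),p)$ if there is a right action $X\times S\to X$ (so $(x\cdot s)\cdot t=x\cdot(st)$) extending the presheaf map $X\times E(S)\to X$, such that $p(x\cdot s)=s^{-1}p(x)s$, and $d_e(x,y)\ge d_{s^{-1}es}(x\cdot s,y\cdot s)$ for all $x,y\in X_e$, $s\in S$. The action is proper if for every $y_1\in X_1$ and $R\ge0$ there is a finite $\mathcal C\subseteq S$ with $\{s\in S: d(y_1\cdot s,y_1\cdot s^{-1}s)\le R\}\subseteq \mathcal C E(S)=\{ce: c\in\mathcal C, e\in E(S)\}$. It is cobounded if there exist $x_1\in X_1$ and $T\ge0$ with $B(x_1,T)\cdot S=X$, where $B(x_1,T)$ is the ball in $(X,d)$. A quasi-generating set is a symmetric subset $\mathcal M=\mathcal M^{-1}\subseteq S$ such that $S$ is generated as a semigroup by $\mathcal M\cup E(S)$. The Cayley metric $d_{\mathcal M}$ on $S$: $d_{\mathcal M}(s,t)=\infty$ if $(s,t)\notin\mathcal L$; otherwise it is the path distance between $s$ and $t$ in the graph whose vertex set is the $\mathcal L$-class of $s$ and where $u,v$ are joined by an edge whenever $gu=v$ for some $g\in\mathcal M$ (edges of length 1). A map $f$ between extended metric spaces $(A,d_A)$, $(B,d_B)$ is a quasi-isometry if there are constants $L\ge1,C\ge0$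 such that $d_A(a,a')<\infty$ iff $d_B(f(a),f(a'))<\infty$, $\frac1L d_A(a,a')-C\le d_B(f(a),f(a'))\le L d_A(a,a')+C$ whenever these are finite, and every point of $B$ is within distance $C$ of $f(A)$. Order-preserving means $s\le t$ in the natural partial order implies $f(s)\le f(t)$ in the partial order of $X$. *)

theory Defs
  imports "HOL-Analysis.Analysis" "HOL-Library.Extended_Real"
begin

text \<open>The inverse monoid S is the whole carrier type 's, with the monoid structure
  given by the type class monoid_mult (multiplication and identity 1).\<close>

definition inverse_monoid :: "'s::monoid_mult itself \<Rightarrow> bool" where
  "inverse_monoid _ \<longleftrightarrow> (\<forall>s::'s. \<exists>!t. s * t * s = s \<and> t * s * t = t)"

definition sinv :: "'s::monoid_mult \<Rightarrow> 's" where
  "sinv s = (THE t. s * t * s = s \<and> t * s * t = t)"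

definition idems :: "'s::monoid_mult set" where
  "idems = {e. e * e = e}"

definition nat_le :: "'s::monoid_mult \<Rightarrow> 's \<Rightarrow> bool" where
  "nat_le s t \<longleftrightarrow> (\<exists>e\<in>idems. s = e * t)"

definition Lrel :: "'s::monoid_mult \<Rightarrow> 's \<Rightarrow> bool" where
  "Lrel s t \<longleftrightarrow> sinv s * s = sinv t * t"

text \<open>X is the carrier type 'x; p : X \<rightarrow> E(S); act is the right action of S on X
  (its restriction to idempotents is the presheaf map); d x y is the fiber metric
  d_e(x,y), meaningful only when p x = p y.\<close>

definition xdist :: "('x \<Rightarrow> 's) \<Rightarrow> ('x \<Rightarrow> 'x \<Rightarrow> real) \<Rightarrow> 'x \<Rightarrow> 'x \<Rightarrow> ereal" where
  "xdist p d x y = (if p x = p y then ereal (d x y) else \<infinity>)"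

definition xle :: "('x \<Rightarrow> 's::monoid_mult) \<Rightarrow> ('x \<Rightarrow> 's \<Rightarrow> 'x) \<Rightarrow> 'x \<Rightarrow> 'x \<Rightarrow> bool" where
  "xle p act x y \<longleftrightarrow> x = act y (p x)"

definition presheaf_metric_action ::
  "('x \<Rightarrow> 's::monoid_mult) \<Rightarrow> ('x \<Rightarrow> 's \<Rightarrow> 'x) \<Rightarrow> ('x \<Rightarrow> 'x \<Rightarrow> real) \<Rightarrow> bool" where
  "presheaf_metric_action p act d \<longleftrightarrow>
     \<comment> \<open>presheaf over E(S), p surjective onto E(S)\<close>
     range p = idems \<and>
     (\<forall>x e f. e \<in> idems \<longrightarrow> f \<in> idems \<longrightarrow> act (act x e) f = act x (e * f)) \<and>
     (\<forall>x. act x (p x) = x) \<and>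
     (\<forall>x e. e \<in> idems \<longrightarrow> p (act x e) = p x * e) \<and>
     \<comment> \<open>each fiber is a metric space\<close>
     (\<forall>x y. p x = p y \<longrightarrow> (d x y = 0 \<longleftrightarrow> x = y)) \<and>
     (\<forall>x y. p x = p y \<longrightarrow> d x y = d y x) \<and>
     (\<forall>x y z. p x = p y \<longrightarrow> p y = p z \<longrightarrow> d x z \<le> d x y + d y z) \<and>
     \<comment> \<open>restriction maps are 1-Lipschitz\<close>
     (\<forall>x y f. p x = p y \<longrightarrow> f \<in> idems \<longrightarrow> d (act x f) (act y f) \<le> d x y) \<and>
     \<comment> \<open>right action of S\<close>
     (\<forall>x s t. act (act x s) t = act x (s * t)) \<and>
     (\<forall>x s. p (act x s) = sinv s * p x * s) \<and>
     (\<forall>x y s. p x = p y \<longrightarrow> d (act x s) (act y s) \<le> d x y)"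

definition geodesic_presheaf :: "('x \<Rightarrow> 's) \<Rightarrow> ('x \<Rightarrow> 'x \<Rightarrow> real) \<Rightarrow> bool" where
  "geodesic_presheaf p d \<longleftrightarrow>
     (\<forall>x y. xdist p d x y < \<infinity> \<longrightarrow>
        (\<exists>\<gamma> :: real \<Rightarrow> 'x. \<gamma> 0 = x \<and> \<gamma> (d x y) = y \<and>
           (\<forall>a\<in>{0..d x y}. \<forall>b\<in>{0..d x y}. xdist p d (\<gamma> a) (\<gamma> b) = ereal \<bar>a - b\<bar>)))"

definition proper_action ::
  "('x \<Rightarrow> 's::monoid_mult) \<Rightarrow> ('x \<Rightarrow> 's \<Rightarrow> 'x) \<Rightarrow> ('x \<Rightarrow> 'x \<Rightarrow> real) \<Rightarrow> bool" where
  "proper_action p act d \<longleftrightarrow>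
     (\<forall>y1 R. p y1 = 1 \<longrightarrow> R \<ge> 0 \<longrightarrow>
        (\<exists>C. finite C \<and>
           {s. xdist p d (act y1 s) (act y1 (sinv s * s)) \<le> ereal R}
             \<subseteq> {c * e | c e. c \<in> C \<and> e \<in> idems}))"

definition cobounded_action ::
  "('x \<Rightarrow> 's::monoid_mult) \<Rightarrow> ('x \<Rightarrow> 's \<Rightarrow> 'x) \<Rightarrow> ('x \<Rightarrow> 'x \<Rightarrow> real) \<Rightarrow> bool" where
  "cobounded_action p act d \<longleftrightarrow>
     (\<exists>x1 T. p x1 = 1 \<and> T \<ge> 0 \<and>
        (\<forall>x. \<exists>y s. xdist p d x1 y \<le> ereal T \<and> x = act y s))"

inductive_set gen_semigroup :: "'s::monoid_mult set \<Rightarrow> 's set" for A where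
  base: "a \<in> A \<Longrightarrow> a \<in> gen_semigroup A"
| mult: "a \<in> gen_semigroup A \<Longrightarrow> b \<in> gen_semigroup A \<Longrightarrow> a * b \<in> gen_semigroup A"

definition quasi_generating :: "'s::monoid_mult set \<Rightarrow> bool" where
  "quasi_generating M \<longleftrightarrow> sinv ` M = M \<and> gen_semigroup (M \<union> idems) = UNIV"

definition cayley_path :: "'s::monoid_mult set \<Rightarrow> 's \<Rightarrow> 's \<Rightarrow> nat \<Rightarrow> bool" where
  "cayley_path M s t n \<longleftrightarrow>
     (\<exists>f :: nat \<Rightarrow> 's. f 0 = s \<and> f n = t \<and> (\<forall>i\<le>n. Lrel (f i) s) \<and>
        (\<forall>i<n. \<exists>g\<in>M. g * f i = f (Suc i) \<or> g * f (Suc i) = f i))"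

definition cayley_dist :: "'s::monoid_mult set \<Rightarrow> 's \<Rightarrow> 's \<Rightarrow> ereal" where
  "cayley_dist M s t =
     (if Lrel s t then (INF n \<in> {n. cayley_path M s t n}. ereal (real n)) else \<infinity>)"

definition quasi_isometry ::
  "('a \<Rightarrow> 'a \<Rightarrow> ereal) \<Rightarrow> ('b \<Rightarrow> 'b \<Rightarrow> ereal) \<Rightarrow> ('a \<Rightarrow> 'b) \<Rightarrow> bool" where
  "quasi_isometry dA dB f \<longleftrightarrow>
     (\<exists>L C::real. L \<ge> 1 \<and> C \<ge> 0 \<and>
        (\<forall>a a'. dA a a' < \<infinity> \<longleftrightarrow> dB (f a) (f a') < \<infinity>) \<and>
        (\<forall>a a'. dA a a' < \<infinity> \<longrightarrow>
           ereal (1 / L) * dA a a' - ereal C \<le> dB (f a) (f a') \<and>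
           dB (f a) (f a') \<le> ereal L * dA a a' + ereal C) \<and>
        (\<forall>b. \<exists>a. dB b (f a) \<le> ereal C))"

end

theory Submission
  imports Defs
begin

lemma inv_ax:
  assumes IM: "inverse_monoid TYPE('s::monoid_mult)"
  shows "(s::'s) * sinv s * s = s" "sinv s * s * sinv s = sinv s"
proof -
  from IM have "\<exists>!t. s * t * s = s \<and> t * s * t = t" unfolding inverse_monoid_def by blast
  then have "s * sinv s * s = s \<and> sinv s * s * sinv s = sinv s"
    unfolding sinv_def by (rule theI')
  then show "(s::'s) * sinv s * s = s" "sinv s * s * sinv s = sinv s" by auto
qed

lemma inv_uniq:
  assumes IM: "inverse_monoid TYPE('s::monoid_mult)"
    and "(s::'s) * t * s = s" "t * s * t = t"
  shows "sinv s = t"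
proof -
  from IM have "\<exists>!t. s * t * s = s \<and> t * s * t = t" unfolding inverse_monoid_def by blast
  then show ?thesis unfolding sinv_def by (rule the1_equality) (simp add: assms(2,3))
qed

lemma sinv_sinv:
  assumes IM: "inverse_monoid TYPE('s::monoid_mult)"
  shows "sinv (sinv (s::'s)) = s"
  using inv_uniq[OF IM, of "sinv s" s] inv_ax[OF IM, of s] by auto

lemma sinv_idem:
  assumes IM: "inverse_monoid TYPE('s::monoid_mult)" and "(e::'s) * e = e"
  shows "sinv e = e"
  using inv_uniq[OF IM, of e e] assms(2) by auto

lemma idem_comm_aux:
  assumes IM: "inverse_monoid TYPE('s::monoid_mult)" and e: "(e::'s) * e = e" and f: "f * f = f"
  shows "(e * f) * (e * f) = e * f"
proof -
  define x where "x = sinv (e * f)"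
  have x1: "e * f * x * (e * f) = e * f" and x2: "x * (e * f) * x = x"
    using inv_ax[OF IM, of "e * f"] by (auto simp: x_def)
  have ee: "e * (e * y) = e * y" for y using e by (metis mult.assoc)
  have ff: "f * (f * y) = f * y" for y using f by (metis mult.assoc)
  have "(e * f) * (f * x * e) * (e * f) = e * f"
  proof -
    have "(e * f) * (f * x * e) * (e * f) = e * (f * (f * (x * (e * (e * f)))))" by (simp add: mult.assoc)
    also have "\<dots> = e * f * x * (e * f)" by (simp add: ee ff mult.assoc)
    finally show ?thesis using x1 by simp
  qed
  moreover have "(f * x * e) * (e * f) * (f * x * e) = f * x * e"
  proof -
    have "(f * x * e) * (e * f) * (f * x * e) = f * (x * (e * (e * (f * (f * (x * e))))))" by (simp add: mult.assoc)
    also have "\<dots> = f * (x * (e * f) * x) * e" by (simp add: ee ff mult.assoc)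
    also have "\<dots> = f * x * e" using x2 by simp
    finally show ?thesis .
  qed
  ultimately have "sinv (e * f) = f * x * e" by (rule inv_uniq[OF IM])
  then have xe: "x = f * x * e" by (simp only: x_def)
  have "x * x = (f * x * e) * (f * x * e)" using arg_cong2[OF xe xe, of "(*)"] .
  also have "\<dots> = f * (x * (e * f) * x) * e" by (simp add: mult.assoc)
  also have "\<dots> = f * x * e" using x2 by simp
  finally have xx: "x * x = x" using xe by simp
  have "e * f = sinv x" using sinv_sinv[OF IM, of "e * f"] by (simp add: x_def)
  also have "\<dots> = x" using sinv_idem[OF IM xx] .
  finally show ?thesis using xx by simp
qed

lemma idem_comm:
  assumes IM: "inverse_monoid TYPE('s::monoid_mult)" and e: "(e::'s) * e = e" and f: "f * f = f"
  shows "e * f = f * e"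
proof -
  have a: "(e * f) * (e * f) = e * f" by (rule idem_comm_aux[OF IM e f])
  have b: "(f * e) * (f * e) = f * e" by (rule idem_comm_aux[OF IM f e])
  have ee: "e * (e * y) = e * y" for y using e by (metis mult.assoc)
  have ff: "f * (f * y) = f * y" for y using f by (metis mult.assoc)
  have "(e * f) * (f * e) * (e * f) = (e * f) * (e * f)" by (simp add: mult.assoc ee ff)
  then have 1: "(e * f) * (f * e) * (e * f) = e * f" using a by simp
  have "(f * e) * (e * f) * (f * e) = (f * e) * (f * e)" by (simp add: mult.assoc ee ff)
  then have 2: "(f * e) * (e * f) * (f * e) = f * e" using b by simp
  have "sinv (e * f) = f * e" using inv_uniq[OF IM 1 2] .
  moreover have "sinv (e * f) = e * f" using sinv_idem[OF IM a] .
  ultimately show ?thesis by simp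
qed

lemma idem_r: assumes IM: "inverse_monoid TYPE('s::monoid_mult)"
  shows "(sinv s * (s::'s)) * (sinv s * s) = sinv s * s"
  using inv_ax[OF IM, of s] by (metis mult.assoc)

lemma idem_l: assumes IM: "inverse_monoid TYPE('s::monoid_mult)"
  shows "((s::'s) * sinv s) * (s * sinv s) = s * sinv s"
  using inv_ax[OF IM, of s] by (metis mult.assoc)

lemma sinv_mult:
  assumes IM: "inverse_monoid TYPE('s::monoid_mult)"
  shows "sinv ((s::'s) * t) = sinv t * sinv s"
proof -
  have c: "(t * sinv t) * (sinv s * s) = (sinv s * s) * (t * sinv t)"
    by (rule idem_comm[OF IM idem_l[OF IM] idem_r[OF IM]])
  have "(s * t) * (sinv t * sinv s) * (s * t) = s * ((t * sinv t) * (sinv s * s)) * t" by (simp add: mult.assoc)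
  also have "\<dots> = s * ((sinv s * s) * (t * sinv t)) * t" using c by simp
  also have "\<dots> = (s * sinv s * s) * (t * sinv t * t)" by (simp add: mult.assoc)
  finally have 1: "(s * t) * (sinv t * sinv s) * (s * t) = s * t" using inv_ax[OF IM] by simp
  have "(sinv t * sinv s) * (s * t) * (sinv t * sinv s) = sinv t * ((sinv s * s) * (t * sinv t)) * sinv s" by (simp add: mult.assoc)
  also have "\<dots> = sinv t * ((t * sinv t) * (sinv s * s)) * sinv s" using c by simp
  also have "\<dots> = (sinv t * t * sinv t) * (sinv s * s * sinv s)" by (simp add: mult.assoc)
  finally have 2: "(sinv t * sinv s) * (s * t) * (sinv t * sinv s) = sinv t * sinv s" using inv_ax[OF IM] by simp
  show ?thesis by (rule inv_uniq[OF IM 1 2])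
qed


lemma le_eq:
  assumes IM: "inverse_monoid TYPE('s::monoid_mult)" and g: "(g::'s) = c * f" and f: "f * f = f"
  shows "g = c * (sinv g * g)"
proof -
  have sf: "sinv f = f" by (rule sinv_idem[OF IM f])
  have "sinv g * g = f * (sinv c * c) * f" using g sinv_mult[OF IM, of c f] sf by (simp add: mult.assoc)
  also have "\<dots> = (sinv c * c) * f * f" using idem_comm[OF IM f idem_r[OF IM, of c]] by simp
  also have "\<dots> = sinv c * c * f" using f by (simp add: mult.assoc)
  finally have "c * (sinv g * g) = (c * sinv c * c) * f" by (simp add: mult.assoc)
  then show ?thesis using inv_ax[OF IM, of c] g by simp
qed

lemma Lrel_fix:
  assumes IM: "inverse_monoid TYPE('s::monoid_mult)" and L: "Lrel ((g::'s) * v) v"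
  shows "sinv g * g * v = v"
proof -
  have L': "sinv v * (sinv g * g) * v = sinv v * v"
    using L sinv_mult[OF IM, of g v] unfolding Lrel_def by (simp add: mult.assoc)
  have "v = v * (sinv v * v)" using inv_ax[OF IM, of v] by (simp add: mult.assoc)
  also have "\<dots> = v * (sinv v * (sinv g * g) * v)" using L' by simp
  also have "\<dots> = (v * sinv v) * (sinv g * g) * v" by (simp add: mult.assoc)
  also have "\<dots> = (sinv g * g) * (v * sinv v) * v"
    using idem_comm[OF IM idem_l[OF IM, of v] idem_r[OF IM, of g]] by simp
  also have "\<dots> = sinv g * g * v" using inv_ax[OF IM, of v] by (simp add: mult.assoc)
  finally show ?thesis by simp
qed

lemma nat_le_mult:
  assumes IM: "inverse_monoid TYPE('s::monoid_mult)" and e: "(e::'s) * e = e" and s: "s = e * t"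
  shows "t * (sinv s * s) = s"
proof -
  have se: "sinv e = e" by (rule sinv_idem[OF IM e])
  have "sinv s * s = sinv t * e * e * t" using s sinv_mult[OF IM, of e t] se by (simp add: mult.assoc)
  also have "\<dots> = sinv t * e * t" using e by (simp add: mult.assoc)
  finally have "t * (sinv s * s) = (t * sinv t) * e * t" by (simp add: mult.assoc)
  also have "\<dots> = e * (t * sinv t) * t" using idem_comm[OF IM idem_l[OF IM, of t] e] by simp
  also have "\<dots> = s" using s inv_ax[OF IM, of t] by (simp add: mult.assoc)
  finally show ?thesis .
qed

lemma INF_nat:
  assumes "(S::nat set) \<noteq> {}"
  shows "(INF n\<in>S. ereal (real n)) = ereal (real (LEAST n. n \<in> S))"
proof (rule antisym)
  from assms obtain m where "m \<in> S" by auto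
  then have "(LEAST n. n \<in> S) \<in> S" by (rule LeastI)
  then show "(INF n\<in>S. ereal (real n)) \<le> ereal (real (LEAST n. n \<in> S))" by (rule INF_lower)
next
  show "ereal (real (LEAST n. n \<in> S)) \<le> (INF n\<in>S. ereal (real n))"
    by (rule INF_greatest) (simp add: Least_le)
qed

lemma cayley_dist_eq:
  assumes "Lrel s t" "cayley_path M s t n"
  shows "\<exists>N. cayley_dist M s t = ereal (real N) \<and> cayley_path M s t N \<and> N \<le> n"
proof -
  let ?S = "{n. cayley_path M s t n}"
  have ne: "?S \<noteq> {}" using assms(2) by auto
  have "cayley_dist M s t = ereal (real (LEAST n. n \<in> ?S))"
    unfolding cayley_dist_def using assms(1) INF_nat[OF ne] by simp
  moreover have "(LEAST n. n \<in> ?S) \<in> ?S" using assms(2) by (intro LeastI) simp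
  moreover have "(LEAST n. n \<in> ?S) \<le> n" using assms(2) by (intro Least_le) simp
  ultimately show ?thesis by blast
qed


theorem theorem2p4:
  fixes p :: "'x \<Rightarrow> 's::monoid_mult"
    and act :: "'x \<Rightarrow> 's \<Rightarrow> 'x"
    and d :: "'x \<Rightarrow> 'x \<Rightarrow> real"
  assumes "inverse_monoid TYPE('s)"
    and "presheaf_metric_action p act d"
    and "geodesic_presheaf p d"
    and "proper_action p act d"
    and "cobounded_action p act d"
  shows "\<exists>M::'s set. finite M \<and> quasi_generating M \<and>
           (\<exists>x1. p x1 = 1 \<and>
              quasi_isometry (cayley_dist M) (xdist p d) (\<lambda>s. act x1 s) \<and>
              (\<forall>s t. nat_le s t \<longrightarrow> xle p act (act x1 s) (act x1 t)))"
proof -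
  note IM = assms(1)
  have PMA: "range p = idems \<and>
     (\<forall>x e f. e \<in> idems \<longrightarrow> f \<in> idems \<longrightarrow> act (act x e) f = act x (e * f)) \<and>
     (\<forall>x. act x (p x) = x) \<and>
     (\<forall>x e. e \<in> idems \<longrightarrow> p (act x e) = p x * e) \<and>
     (\<forall>x y. p x = p y \<longrightarrow> (d x y = 0 \<longleftrightarrow> x = y)) \<and>
     (\<forall>x y. p x = p y \<longrightarrow> d x y = d y x) \<and>
     (\<forall>x y z. p x = p y \<longrightarrow> p y = p z \<longrightarrow> d x z \<le> d x y + d y z) \<and>
     (\<forall>x y f. p x = p y \<longrightarrow> f \<in> idems \<longrightarrow> d (act x f) (act y f) \<le> d x y) \<and>
     (\<forall>x s t. act (act x s) t = act x (s * t)) \<and>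
     (\<forall>x s. p (act x s) = sinv s * p x * s) \<and>
     (\<forall>x y s. p x = p y \<longrightarrow> d (act x s) (act y s) \<le> d x y)"
    using assms(2) unfolding presheaf_metric_action_def .
  have Pact: "\<And>x s. p (act x s) = sinv s * p x * s" using PMA by simp
  have Acomp: "\<And>x s t. act (act x s) t = act x (s * t)" using PMA by simp
  have D0: "\<And>x y. p x = p y \<Longrightarrow> (d x y = 0 \<longleftrightarrow> x = y)" using PMA by simp
  have Dsym: "\<And>x y. p x = p y \<Longrightarrow> d x y = d y x" using PMA by simp
  have Dtri: "\<And>x y z. p x = p y \<Longrightarrow> p y = p z \<Longrightarrow> d x z \<le> d x y + d y z" using PMA by simp
  have Dlip: "\<And>x y s. p x = p y \<Longrightarrow> d (act x s) (act y s) \<le> d x y" using PMA by simp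
  from assms(5) obtain x1 T where px1: "p x1 = 1" and T0: "T \<ge> 0"
    and cob: "\<And>x. \<exists>y s. xdist p d x1 y \<le> ereal T \<and> x = act y s"
    unfolding cobounded_action_def by blast
  have R0: "0 \<le> 2*T+1" using T0 by simp
  from assms(4) px1 R0 obtain C where finC: "finite C"
    and Csub: "{s. xdist p d (act x1 s) (act x1 (sinv s * s)) \<le> ereal (2*T+1)}
             \<subseteq> {c * e | c e. c \<in> C \<and> e \<in> idems}"
    unfolding proper_action_def by blast
  define M where "M = C \<union> sinv ` C"
  have finM: "finite M" using finC by (simp add: M_def)
  have Msym: "sinv ` M = M"
    unfolding M_def image_Un image_image sinv_sinv[OF IM] by auto
  have Minv: "g \<in> M \<Longrightarrow> sinv g \<in> M" for g using Msym by blast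
  have pA: "p (act x1 s) = sinv s * s" for s using Pact[of x1 s] px1 by simp
  have pA_eq: "p (act x1 s) = p (act x1 t) \<longleftrightarrow> Lrel s t" for s t
    unfolding pA Lrel_def by simp
  have xd: "xdist p d (act x1 s) (act x1 t) = (if Lrel s t then ereal (d (act x1 s) (act x1 t)) else \<infinity>)" for s t
    unfolding xdist_def pA_eq ..
  have Lsym: "Lrel a b \<Longrightarrow> Lrel b a" for a b :: 's unfolding Lrel_def by simp
  have Ltrans: "Lrel a b \<Longrightarrow> Lrel b c \<Longrightarrow> Lrel a c" for a b c :: 's unfolding Lrel_def by simp
  have dxx: "d x x = 0" for x using D0[of x x] by simp
  have dnn: "0 \<le> d x y" if pxy: "p x = p y" for x y
  proof -
    have "d x x \<le> d x y + d y x" by (rule Dtri[OF pxy pxy[symmetric]])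
    moreover have "d x y = d y x" by (rule Dsym[OF pxy])
    ultimately show ?thesis using dxx[of x] by linarith
  qed
  have step: "\<exists>m\<in>M. m * u = v" if L: "Lrel u v" and dl: "d (act x1 u) (act x1 v) \<le> 2*T+1" for u v
  proof -
    define g where "g = v * sinv u"
    have gu: "g * u = v"
      using L inv_ax[OF IM, of v] unfolding g_def Lrel_def by (simp add: mult.assoc)
    have gg: "sinv g * g = u * sinv u"
    proof -
      have "sinv g * g = u * (sinv v * v) * sinv u"
        unfolding g_def sinv_mult[OF IM] sinv_sinv[OF IM] by (simp add: mult.assoc)
      also have "\<dots> = u * sinv u * u * sinv u" using L unfolding Lrel_def by (simp add: mult.assoc)
      also have "\<dots> = u * sinv u" using inv_ax[OF IM, of u] by simp
      finally show ?thesis .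
    qed
    have e1: "act x1 g = act (act x1 v) (sinv u)" unfolding g_def Acomp ..
    have e2: "act x1 (sinv g * g) = act (act x1 u) (sinv u)" unfolding gg Acomp ..
    have peq: "p (act x1 v) = p (act x1 u)" using pA_eq L Lsym by blast
    have "d (act x1 g) (act x1 (sinv g * g)) \<le> d (act x1 v) (act x1 u)"
      unfolding e1 e2 by (rule Dlip[OF peq])
    also have "\<dots> \<le> 2*T+1" using dl Dsym[OF peq] by simp
    finally have dg: "d (act x1 g) (act x1 (sinv g * g)) \<le> 2*T+1" .
    have "Lrel g (sinv g * g)" unfolding Lrel_def
      using sinv_idem[OF IM idem_r[OF IM, of g]] idem_r[OF IM, of g] by simp
    then have "xdist p d (act x1 g) (act x1 (sinv g * g)) \<le> ereal (2*T+1)"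
      using dg xd by simp
    then have "g \<in> {c * e | c e. c \<in> C \<and> e \<in> idems}" using Csub by blast
    then obtain c f where c: "c \<in> C" and f: "f * f = f" and gcf: "g = c * f"
      unfolding idems_def by blast
    have "g = c * (sinv g * g)" by (rule le_eq[OF IM gcf f])
    then have "g * u = c * (u * sinv u * u)" unfolding gg by (simp add: mult.assoc)
    then have "c * u = v" using gu inv_ax[OF IM, of u] by simp
    moreover have "c \<in> M" using c by (simp add: M_def)
    ultimately show ?thesis by blast
  qed
  define K where "K = Max (insert 0 ((\<lambda>g. d (act x1 (sinv g * g)) (act x1 g)) ` M))"
  have K0: "0 \<le> K" unfolding K_def using finM by (intro Max_ge) auto
  have edge: "d (act x1 u) (act x1 (g * u)) \<le> K" if g: "g \<in> M" and L: "Lrel (g * u) u" for g u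
  proof -
    have a1: "act x1 u = act (act x1 (sinv g * g)) u"
      unfolding Acomp using Lrel_fix[OF IM L] by (simp add: mult.assoc)
    have a2: "act x1 (g * u) = act (act x1 g) u" unfolding Acomp ..
    have peq: "p (act x1 (sinv g * g)) = p (act x1 g)"
      unfolding pA using sinv_idem[OF IM idem_r[OF IM, of g]] idem_r[OF IM, of g] by simp
    have "d (act x1 u) (act x1 (g * u)) \<le> d (act x1 (sinv g * g)) (act x1 g)"
      unfolding a1 a2 by (rule Dlip[OF peq])
    also have "\<dots> \<le> K" unfolding K_def using finM g by (intro Max_ge) auto
    finally show ?thesis .
  qed
  have pathub: "d (act x1 s) (act x1 t) \<le> K * real n" if P: "cayley_path M s t n" for s t n
  proof -
    from P obtain f where f0: "f 0 = s" and fn: "f n = t" and fL: "\<forall>i\<le>n. Lrel (f i) s"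
      and fe: "\<forall>i<n. \<exists>g\<in>M. g * f i = f (Suc i) \<or> g * f (Suc i) = f i"
      unfolding cayley_path_def by blast
    have "i \<le> n \<longrightarrow> d (act x1 s) (act x1 (f i)) \<le> K * real i" for i
    proof (induction i)
      case 0
      then show ?case using f0 D0[of "act x1 s" "act x1 s"] by simp
    next
      case (Suc i)
      show ?case
      proof
        assume si: "Suc i \<le> n"
        have IH: "d (act x1 s) (act x1 (f i)) \<le> K * real i" using Suc si by simp
        have L1: "Lrel (f i) s" and L2: "Lrel (f (Suc i)) s" using fL si by auto
        have p1: "p (act x1 s) = p (act x1 (f i))" using pA_eq L1 Lsym by blast
        have p2: "p (act x1 (f i)) = p (act x1 (f (Suc i)))" using pA_eq L1 L2 Lsym Ltrans by blast
        have ed: "d (act x1 (f i)) (act x1 (f (Suc i))) \<le> K"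
        proof -
          obtain g where g: "g \<in> M" and "g * f i = f (Suc i) \<or> g * f (Suc i) = f i"
            using fe[rule_format, of i] si by (meson Suc_le_lessD)
          from this(2) show ?thesis
          proof
            assume h: "g * f i = f (Suc i)"
            have "Lrel (g * f i) (f i)" unfolding h using L1 L2 Lsym Ltrans by blast
            from edge[OF g this] show ?thesis unfolding h .
          next
            assume h: "g * f (Suc i) = f i"
            have "Lrel (g * f (Suc i)) (f (Suc i))" unfolding h using L1 L2 Lsym Ltrans by blast
            from edge[OF g this] show ?thesis unfolding h using Dsym[OF p2] by simp
          qed
        qed
        have "d (act x1 s) (act x1 (f (Suc i))) \<le> d (act x1 s) (act x1 (f i)) + d (act x1 (f i)) (act x1 (f (Suc i)))"
          by (rule Dtri[OF p1 p2])
        also have "\<dots> \<le> K * real i + K" using IH ed by simp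
        finally show "d (act x1 s) (act x1 (f (Suc i))) \<le> K * real (Suc i)" by (simp add: algebra_simps)
      qed
    qed
    from this[of n] show ?thesis using fn by simp
  qed
  have pathex: "cayley_path M s t (nat \<lceil>d (act x1 s) (act x1 t)\<rceil> + 1)" if L: "Lrel s t" for s t
  proof -
    define D where "D = d (act x1 s) (act x1 t)"
    define N where "N = nat \<lceil>D\<rceil> + 1"
    have pst: "p (act x1 s) = p (act x1 t)" using pA_eq L by blast
    have D0': "0 \<le> D" unfolding D_def by (rule dnn[OF pst])
    have "xdist p d (act x1 s) (act x1 t) < \<infinity>" using xd L by simp
    then obtain \<gamma> :: "real \<Rightarrow> 'x" where g0: "\<gamma> 0 = act x1 s" and gD: "\<gamma> D = act x1 t"
      and gi: "\<forall>a\<in>{0..D}. \<forall>b\<in>{0..D}. xdist p d (\<gamma> a) (\<gamma> b) = ereal \<bar>a - b\<bar>"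
      using assms(3) unfolding geodesic_presheaf_def D_def by blast
    have gp: "p (\<gamma> a) = p (\<gamma> b) \<and> d (\<gamma> a) (\<gamma> b) = \<bar>a - b\<bar>" if "a \<in> {0..D}" "b \<in> {0..D}" for a b
      using gi that unfolding xdist_def by (metis PInfty_neq_ereal(1) ereal.inject)
    have gps: "p (\<gamma> a) = sinv s * s" if "a \<in> {0..D}" for a
      using gp[OF that, of 0] D0' g0 pA by simp
    define h where "h = D / real N"
    have Npos: "0 < N" unfolding N_def by simp
    have h0: "0 \<le> h" unfolding h_def using D0' by simp
    have hN: "real N * h = D" unfolding h_def using Npos by simp
    have h1: "h \<le> 1"
    proof -
      have "D \<le> real N" unfolding N_def by linarith
      then show ?thesis unfolding h_def using Npos D0' by (simp add: divide_le_eq)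
    qed
    have ih_in: "real i * h \<in> {0..D}" if "i \<le> N" for i
    proof -
      have "real i * h \<le> real N * h" using that h0 by (simp add: mult_right_mono)
      then show ?thesis using hN h0 by simp
    qed
    have ex: "\<exists>w. Lrel w s \<and> d (act x1 w) (\<gamma> (real i * h)) \<le> T" if "i \<le> N" for i
    proof -
      obtain y w where y: "xdist p d x1 y \<le> ereal T" and gw: "\<gamma> (real i * h) = act y w"
        using cob by blast
      have py: "p x1 = p y" and dy: "d x1 y \<le> T" using y unfolding xdist_def
        by (auto split: if_splits)
      have "sinv w * w = p (\<gamma> (real i * h))" unfolding gw Pact using py px1 by simp
      also have "\<dots> = sinv s * s" by (rule gps[OF ih_in[OF that]])
      finally have "Lrel w s" unfolding Lrel_def .
      moreover have "d (act x1 w) (\<gamma> (real i * h)) \<le> T"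
        unfolding gw using Dlip[OF py, of w] dy by simp
      ultimately show ?thesis by blast
    qed
    define u where "u i = (if i = 0 then s else if i = N then t
        else (SOME w. Lrel w s \<and> d (act x1 w) (\<gamma> (real i * h)) \<le> T))" for i
    have uP: "Lrel (u i) s \<and> d (act x1 (u i)) (\<gamma> (real i * h)) \<le> T" if "i \<le> N" for i
    proof (cases "i = 0")
      case True
      then show ?thesis unfolding u_def using g0 D0[of "act x1 s" "act x1 s"] T0
        by (simp add: Lrel_def)
    next
      case False
      show ?thesis
      proof (cases "i = N")
        case True
        then show ?thesis unfolding u_def using False hN gD D0[of "act x1 t" "act x1 t"] T0 L Lsym
          by simp
      next
        case F2: False
        show ?thesis unfolding u_def using False F2 someI_ex[OF ex[OF that]] by simp
      qed
    qed
    have uL: "Lrel (u i) s" if "i \<le> N" for i using uP[OF that] by blast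
    have pu: "p (act x1 (u i)) = sinv s * s" if "i \<le> N" for i
      using uL[OF that] pA unfolding Lrel_def by simp
    have "\<exists>g\<in>M. g * u i = u (Suc i)" if iN: "i < N" for i
    proof (rule step)
      have l1: "Lrel (u i) s" using uL[of i] iN by simp
      have l2: "Lrel (u (Suc i)) s" using uL[of "Suc i"] iN by simp
      show "Lrel (u i) (u (Suc i))" by (rule Ltrans[OF l1 Lsym[OF l2]])
      have a: "real i * h \<in> {0..D}" using ih_in[of i] iN by simp
      have b: "real (Suc i) * h \<in> {0..D}" using ih_in[of "Suc i"] iN by (simp only: Suc_le_eq)
      have pa: "p (act x1 (u i)) = p (\<gamma> (real i * h))" using pu[of i] gps[OF a] iN by simp
      have pb: "p (\<gamma> (real i * h)) = p (\<gamma> (real (Suc i) * h))" using gps[OF a] gps[OF b] by simp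
      have pc: "p (\<gamma> (real (Suc i) * h)) = p (act x1 (u (Suc i)))" using pu[of "Suc i"] gps[OF b] iN by simp
      have t1: "d (act x1 (u i)) (act x1 (u (Suc i))) \<le> d (act x1 (u i)) (\<gamma> (real i * h)) + d (\<gamma> (real i * h)) (act x1 (u (Suc i)))"
        by (rule Dtri[OF pa]) (use pb pc in simp)
      have t2: "d (\<gamma> (real i * h)) (act x1 (u (Suc i))) \<le> d (\<gamma> (real i * h)) (\<gamma> (real (Suc i) * h)) + d (\<gamma> (real (Suc i) * h)) (act x1 (u (Suc i)))"
        by (rule Dtri[OF pb pc])
      have "d (\<gamma> (real i * h)) (\<gamma> (real (Suc i) * h)) = \<bar>real i * h - real (Suc i) * h\<bar>"
        using gp[OF a b] by blast
      also have "\<dots> = h" using h0 by (simp add: algebra_simps)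
      finally have t3: "d (\<gamma> (real i * h)) (\<gamma> (real (Suc i) * h)) = h" .
      have t4': "d (act x1 (u (Suc i))) (\<gamma> (real (Suc i) * h)) \<le> T"
        using uP[of "Suc i"] iN by simp
      have t4: "d (\<gamma> (real (Suc i) * h)) (act x1 (u (Suc i))) \<le> T"
        using t4' Dsym[OF pc] by linarith
      have t5: "d (act x1 (u i)) (\<gamma> (real i * h)) \<le> T" using uP[of i] iN by simp
      show "d (act x1 (u i)) (act x1 (u (Suc i))) \<le> 2*T+1"
        using t1 t2 t3 t4 t5 h1 by linarith
    qed
    then have edges: "\<forall>i<N. \<exists>g\<in>M. g * u i = u (Suc i) \<or> g * u (Suc i) = u i" by blast
    have u0: "u 0 = s" and uN: "u N = t" using Npos by (auto simp: u_def)
    have uLs: "\<forall>i\<le>N. Lrel (u i) s" using uL by blast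
    have "cayley_path M s t N" unfolding cayley_path_def
      using u0 uN uLs edges by blast
    then show ?thesis unfolding N_def D_def .
  qed
  have cdist: "\<exists>N. cayley_dist M s t = ereal (real N) \<and> cayley_path M s t N \<and> N \<le> nat \<lceil>d (act x1 s) (act x1 t)\<rceil> + 1"
    if L: "Lrel s t" for s t
    by (rule cayley_dist_eq[OF L pathex[OF L]])
  have cdinf: "cayley_dist M s t = \<infinity>" if "\<not> Lrel s t" for s t
    using that unfolding cayley_dist_def by simp
  have gen: "s \<in> gen_semigroup (M \<union> idems)" for s
  proof -
    let ?e = "sinv s * s"
    have L: "Lrel ?e s" unfolding Lrel_def
      using sinv_idem[OF IM idem_r[OF IM, of s]] idem_r[OF IM, of s] by simp
    from pathex[OF L] obtain n where "cayley_path M ?e s n" by blast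
    then obtain f where f0: "f 0 = ?e" and fn: "f n = s" and fL: "\<forall>i\<le>n. Lrel (f i) ?e"
      and fe: "\<forall>i<n. \<exists>g\<in>M. g * f i = f (Suc i) \<or> g * f (Suc i) = f i"
      unfolding cayley_path_def by blast
    have "i \<le> n \<longrightarrow> f i \<in> gen_semigroup (M \<union> idems)" for i
    proof (induction i)
      case 0
      have "?e \<in> idems" unfolding idems_def using idem_r[OF IM, of s] by simp
      then show ?case using f0 by (auto intro: gen_semigroup.base)
    next
      case (Suc i)
      show ?case
      proof
        assume si: "Suc i \<le> n"
        have IH: "f i \<in> gen_semigroup (M \<union> idems)" using Suc si by simp
        have L1: "Lrel (f i) ?e" and L2: "Lrel (f (Suc i)) ?e" using fL si by auto
        obtain g where g: "g \<in> M" and "g * f i = f (Suc i) \<or> g * f (Suc i) = f i"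
          using fe[rule_format, of i] si by (meson Suc_le_lessD)
        from this(2) show "f (Suc i) \<in> gen_semigroup (M \<union> idems)"
        proof
          assume h: "g * f i = f (Suc i)"
          have "g \<in> gen_semigroup (M \<union> idems)" using g by (auto intro: gen_semigroup.base)
          from gen_semigroup.mult[OF this IH] show ?thesis unfolding h .
        next
          assume h: "g * f (Suc i) = f i"
          have "Lrel (g * f (Suc i)) (f (Suc i))" unfolding h by (rule Ltrans[OF L1 Lsym[OF L2]])
          from Lrel_fix[OF IM this] have "f (Suc i) = sinv g * f i"
            unfolding h[symmetric] by (simp add: mult.assoc)
          moreover have "sinv g \<in> gen_semigroup (M \<union> idems)" using Minv[OF g] by (auto intro: gen_semigroup.base)
          ultimately show ?thesis using gen_semigroup.mult[OF _ IH] by simp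
        qed
      qed
    qed
    from this[of n] show ?thesis using fn by simp
  qed
  have QG: "quasi_generating M" unfolding quasi_generating_def using Msym gen by blast
  have ORD: "\<forall>s t. nat_le s t \<longrightarrow> xle p act (act x1 s) (act x1 t)"
  proof (intro allI impI)
    fix s t :: 's assume "nat_le s t"
    then obtain e where e: "e * e = e" and se: "s = e * t" unfolding nat_le_def idems_def by blast
    have "act (act x1 t) (p (act x1 s)) = act x1 (t * (sinv s * s))" unfolding pA Acomp ..
    also have "\<dots> = act x1 s" using nat_le_mult[OF IM e se] by simp
    finally show "xle p act (act x1 s) (act x1 t)" unfolding xle_def by simp
  qed
  define L0 where "L0 = max 1 K"
  define C0 where "C0 = max T 2"
  have L01: "1 \<le> L0" unfolding L0_def by simp
  have C00: "0 \<le> C0" "T \<le> C0" "2 \<le> C0" unfolding C0_def by auto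
  have KL: "K \<le> L0" unfolding L0_def by simp
  have Q1: "cayley_dist M a a' < \<infinity> \<longleftrightarrow> xdist p d (act x1 a) (act x1 a') < \<infinity>" for a a'
    proof (cases "Lrel a a'")
      case True
      then obtain N where "cayley_dist M a a' = ereal (real N)" using cdist by blast
      then show ?thesis using True xd by simp
    next
      case False
      then show ?thesis using cdinf xd by simp
    qed
  have Q2: "ereal (1 / L0) * cayley_dist M a a' - ereal C0 \<le> xdist p d (act x1 a) (act x1 a') \<and>
      xdist p d (act x1 a) (act x1 a') \<le> ereal L0 * cayley_dist M a a' + ereal C0"
    if fin: "cayley_dist M a a' < \<infinity>" for a a'
  proof -
    have L: "Lrel a a'" using fin cdinf by force
    define D where "D = d (act x1 a) (act x1 a')"
    have Dnn: "0 \<le> D" unfolding D_def by (rule dnn) (use pA_eq L in blast)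
    obtain N where cN: "cayley_dist M a a' = ereal (real N)" and pN: "cayley_path M a a' N"
      and NB: "N \<le> nat \<lceil>D\<rceil> + 1" using cdist[OF L] unfolding D_def by blast
    have xdD: "xdist p d (act x1 a) (act x1 a') = ereal D" using xd L unfolding D_def by simp
    have N2: "real N \<le> D + 2" using NB Dnn by linarith
    have DK: "D \<le> K * real N" unfolding D_def by (rule pathub[OF pN])
    have KN: "K * real N \<le> L0 * real N" using KL by (simp add: mult_right_mono)
    have LN: "(1 / L0) * real N \<le> 1 * real N"
      by (rule mult_right_mono) (use L01 in auto)
    have A: "ereal (1 / L0) * cayley_dist M a a' - ereal C0 \<le> xdist p d (act x1 a) (act x1 a')"
      unfolding cN xdD using N2 LN C00 by simp
    have B: "xdist p d (act x1 a) (act x1 a') \<le> ereal L0 * cayley_dist M a a' + ereal C0"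
      unfolding cN xdD using DK KN C00 by simp
    show ?thesis using A B by blast
  qed
  have Q3: "\<exists>a. xdist p d b (act x1 a) \<le> ereal C0" for b
  proof -
    obtain y w where y: "xdist p d x1 y \<le> ereal T" and bw: "b = act y w" using cob by blast
    have py: "p x1 = p y" and dy: "d x1 y \<le> T" using y unfolding xdist_def
      by (auto split: if_splits)
    have pb: "p b = p (act x1 w)" unfolding bw Pact using py by simp
    have "d (act y w) (act x1 w) \<le> d y x1" by (rule Dlip) (use py in simp)
    moreover have "d y x1 = d x1 y" by (rule Dsym) (use py in simp)
    ultimately have "d b (act x1 w) \<le> C0" unfolding bw using dy C00 by linarith
    then have "xdist p d b (act x1 w) \<le> ereal C0" unfolding xdist_def using pb by simp
    then show "\<exists>a. xdist p d b (act x1 a) \<le> ereal C0" by blast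
  qed
  have QI: "quasi_isometry (cayley_dist M) (xdist p d) (\<lambda>s. act x1 s)"
    unfolding quasi_isometry_def
    apply (rule exI[of _ L0], rule exI[of _ C0])
    using L01 C00(1) Q1 Q2 Q3 by blast
  show ?thesis
    using finM QG px1 QI ORD by blast
qed

end
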